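(* Let $0<a<1$, $0<p<1$, let $x^\ast>0$ be the solution of $P(a,x)=p$, and let $x_0$ be any number with $0<x_0\le x^\ast$ (for instance $x_0=(p\,\Gamma(a+1))^{1/a}$). Define the Newton iterates $$x_{n+1}=x_n-\frac{P(a,x_n)-p}{\partial_x P(a,x_n)},\qquad n\ge0.$$ Then $(x_n)$ is nondecreasing, satisfies $x_n\le x^\ast$ for all $n$, and converges to $x^\ast$.
   Context: $P(a,x)=\frac{1}{\Gamma(a)}\int_0^x t^{a-1}e^{-t}\,dt$ for $a>0$, $x>0$, so $\partial_xP(a,x)=x^{a-1}e^{-x}/\Gamma(a)$. *)

theory Defs
  imports "HOL-Analysis.Analysis"
begin

definition regP :: "real \<Rightarrow> real \<Rightarrow> real" where
  "regP a x = integral {0..x} (\<lambda>t. t powr (a - 1) * exp (- t)) / Gamma a"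

definition regP_dx :: "real \<Rightarrow> real \<Rightarrow> real" where
  "regP_dx a x = x powr (a - 1) * exp (- x) / Gamma a"

end

theory Submission
  imports Defs
begin

lemma g_meas: "(\<lambda>t::real. t powr (a-1) * exp (-t)) \<in> borel_measurable (lebesgue_on S)"
  by (intro measurable_restrict_space1 measurable_completion) (simp, measurable)

lemma g_int:
  assumes "0 < a" "0 \<le> c"
  shows "(\<lambda>t::real. t powr (a-1) * exp (-t)) integrable_on {0..c}"
proof (rule measurable_bounded_by_integrable_imp_integrable_real[OF g_meas])
  show "(\<lambda>t. t powr (a-1)) integrable_on {0..c}"
    using integrable_on_powr_from_0[of "a-1" c] assms by simp
  show "{0..c} \<in> sets lebesgue" by simp
  fix t :: real assume t: "t \<in> {0..c}"
  have "\<bar>t powr (a-1) * exp (-t)\<bar> = t powr (a-1) * exp (-t)" by simp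
  also have "\<dots> \<le> t powr (a-1) * 1"
    using t by (intro mult_left_mono) auto
  finally show "\<bar>t powr (a-1) * exp (-t)\<bar> \<le> t powr (a-1)" by simp
qed

lemma g_anti:
  assumes "a < 1" "0 < s" "s \<le> t"
  shows "t powr (a-1) * exp (-t) \<le> s powr (a-1) * exp (-(s::real))"
proof (rule mult_mono)
  show "t powr (a-1) \<le> s powr (a-1)" using assms by (intro powr_mono2') auto
qed (use assms in auto)

lemma g_bounds:
  assumes "0 < a" "a < 1" "0 < u" "u \<le> v"
  defines "g \<equiv> \<lambda>t::real. t powr (a-1) * exp (-t)"
  shows "integral {0..v} g - integral {0..u} g \<le> g u * (v - u)"
    and "g v * (v - u) \<le> integral {0..v} g - integral {0..u} g"
proof -
  have iv: "g integrable_on {0..v}" unfolding g_def using g_int assms by auto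
  have comb: "integral {0..u} g + integral {u..v} g = integral {0..v} g"
    using Henstock_Kurzweil_Integration.integral_combine[OF _ _ iv, of u] assms by auto
  have iuv: "g integrable_on {u..v}" using integrable_subinterval_real[OF iv] assms by auto
  have "integral {u..v} g \<le> integral {u..v} (\<lambda>_. g u)"
    by (rule integral_le[OF iuv]) (use assms g_anti in auto)
  hence "integral {u..v} g \<le> g u * (v - u)" using assms by (simp add: mult_ac)
  then show "integral {0..v} g - integral {0..u} g \<le> g u * (v - u)"
    using comb by linarith
  have "integral {u..v} (\<lambda>_. g v) \<le> integral {u..v} g"
    by (rule integral_le[OF _ iuv]) (use assms g_anti in auto)
  hence "g v * (v - u) \<le> integral {u..v} g" using assms by (simp add: mult_ac)
  then show "g v * (v - u) \<le> integral {0..v} g - integral {0..u} g"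
    using comb by linarith
qed

theorem mainTheorem4:
  fixes a p xstar :: real and x :: "nat \<Rightarrow> real"
  assumes "0 < a" "a < 1" "0 < p" "p < 1"
    and "0 < xstar" "regP a xstar = p"
    and "0 < x 0" "x 0 \<le> xstar"
    and "\<And>n. x (Suc n) = x n - (regP a (x n) - p) / regP_dx a (x n)"
  shows "mono x \<and> (\<forall>n. x n \<le> xstar) \<and> x \<longlonglongrightarrow> xstar"
proof -
  define g where "g = (\<lambda>t::real. t powr (a-1) * exp (-t))"
  define F where "F = (\<lambda>y. integral {0..y} g)"
  define G where "G = Gamma a"
  have G: "G > 0" using assms(1) unfolding G_def by simp
  have gpos: "g t > 0" if "t > 0" for t using that unfolding g_def by simp
  have step: "x (Suc n) = x n + (F xstar - F (x n)) / g (x n)" if "x n > 0" for n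
  proof -
    have "x (Suc n) = x n - (F (x n) / G - F xstar / G) / (g (x n) / G)"
      using assms(9)[of n] assms(6) unfolding regP_def regP_dx_def F_def g_def G_def by simp
    also have "\<dots> = x n + (F xstar - F (x n)) / g (x n)"
      using G gpos[OF that] by (simp add: field_simps)
    finally show ?thesis .
  qed
  define c where "c = g xstar / g (x 0)"
  have c: "0 < c" "c \<le> 1"
    using gpos assms g_anti[OF assms(2) assms(7) assms(8)] unfolding c_def g_def
    by (auto simp: field_simps)
  have one: "y \<le> y + (F xstar - F y) / g y \<and> y + (F xstar - F y) / g y \<le> xstar
      \<and> xstar - (y + (F xstar - F y) / g y) \<le> (1 - c) * (xstar - y)"
    if y: "x 0 \<le> y" "y \<le> xstar" for y
  proof -
    have y0: "0 < y" using y assms(7) by linarith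
    have gy: "g y > 0" using gpos y0 .
    have b1: "F xstar - F y \<le> g y * (xstar - y)"
      using g_bounds(1)[OF assms(1,2) y0 y(2)] unfolding F_def g_def by simp
    have b2: "g xstar * (xstar - y) \<le> F xstar - F y"
      using g_bounds(2)[OF assms(1,2) y0 y(2)] unfolding F_def g_def by simp
    have gx: "g xstar > 0" using gpos assms(5) by simp
    have gyx0: "g y \<le> g (x 0)" using g_anti[OF assms(2) assms(7) y(1)] unfolding g_def by simp
    have "c \<le> g xstar / g y" unfolding c_def
      using gx gy gyx0 by (intro divide_left_mono) auto
    hence "c * (xstar - y) \<le> g xstar / g y * (xstar - y)"
      using y(2) by (intro mult_right_mono) auto
    also have "\<dots> = (g xstar * (xstar - y)) / g y" by simp
    also have "\<dots> \<le> (F xstar - F y) / g y"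
      using b2 gy by (intro divide_right_mono) auto
    finally have cb: "c * (xstar - y) \<le> (F xstar - F y) / g y" .
    have nn: "0 \<le> (F xstar - F y) / g y"
    proof -
      have "0 \<le> g xstar * (xstar - y)" using gx y(2) by simp
      thus ?thesis using b2 gy by (intro divide_nonneg_pos) auto
    qed
    have le: "(F xstar - F y) / g y \<le> xstar - y"
      using b1 gy by (simp add: field_simps)
    show ?thesis using nn le cb by (simp add: algebra_simps)
  qed
  have bnd: "x 0 \<le> x n \<and> x n \<le> xstar" for n
  proof (induction n)
    case 0 show ?case using assms(8) by simp
  next
    case (Suc n)
    have "x n > 0" using Suc assms(7) by linarith
    then show ?case using step[of n] one[of "x n"] Suc by auto
  qed
  have nxt: "x n \<le> x (Suc n) \<and> xstar - x (Suc n) \<le> (1 - c) * (xstar - x n)" for n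
  proof -
    have "x n > 0" using bnd[of n] assms(7) by linarith
    then show ?thesis using step[of n] one[of "x n"] bnd[of n] by auto
  qed
  have mono: "mono x" using nxt by (intro incseq_SucI) auto
  have geo: "xstar - x n \<le> (1 - c) ^ n * (xstar - x 0)" for n
  proof (induction n)
    case 0 show ?case by simp
  next
    case (Suc n)
    have "xstar - x (Suc n) \<le> (1 - c) * (xstar - x n)" using nxt by auto
    also have "\<dots> \<le> (1 - c) * ((1 - c) ^ n * (xstar - x 0))"
      using Suc c by (intro mult_left_mono) auto
    finally show ?case by simp
  qed
  have "(\<lambda>n. (1 - c) ^ n * (xstar - x 0)) \<longlonglongrightarrow> 0 * (xstar - x 0)"
    using c by (intro tendsto_mult LIMSEQ_power_zero tendsto_const) auto
  hence z: "(\<lambda>n. (1 - c) ^ n * (xstar - x 0)) \<longlonglongrightarrow> 0" by simp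
  have "(\<lambda>n. xstar - x n) \<longlonglongrightarrow> 0"
    by (rule tendsto_sandwich[OF _ _ tendsto_const z]) (use bnd geo in auto)
  hence "(\<lambda>n. xstar - (xstar - x n)) \<longlonglongrightarrow> xstar - 0"
    by (intro tendsto_diff tendsto_const)
  hence "x \<longlonglongrightarrow> xstar" by simp
  then show ?thesis using mono bnd by auto
qed

end
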